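(* Let $G$ be a finite group, $m$ a positive integer and $n$ a positive odd integer. Then $\mathrm{Pow}(G)\cong \mathrm{Pow}\big((\prod_{i=1}^{m}\mathbb{Z}_2)\times\mathbb{Z}_n\big)$ if and only if $G\cong (\prod_{i=1}^{m}\mathbb{Z}_2)\times\mathbb{Z}_n$.
   Context: All groups are finite. $\mathbb{Z}_k$ denotes the cyclic group of order $k$, and $\prod_{i=1}^m\mathbb{Z}_2$ the direct product of $m$ copies of $\mathbb{Z}_2$. For a group $X$, the power graph $\mathrm{Pow}(X)$ is the simple graph with vertex set $X$ in which two distinct vertices $x,y$ are adjacent if and only if $y\in\langle x\rangle$ or $x\in\langle y\rangle$. *)

theory Defs
  imports "HOL-Algebra.Algebra"
begin

definition power_adj :: "('a, 'b) monoid_scheme \<Rightarrow> 'a \<Rightarrow> 'a \<Rightarrow> bool" where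
  "power_adj Gr x y \<longleftrightarrow> x \<in> carrier Gr \<and> y \<in> carrier Gr \<and> x \<noteq> y \<and>
     (y \<in> generate Gr {x} \<or> x \<in> generate Gr {y})"

definition power_graph_iso :: "('a, 'b) monoid_scheme \<Rightarrow> ('c, 'd) monoid_scheme \<Rightarrow> bool" where
  "power_graph_iso Gr Hr \<longleftrightarrow> (\<exists>f. bij_betw f (carrier Gr) (carrier Hr) \<and>
     (\<forall>x\<in>carrier Gr. \<forall>y\<in>carrier Gr. power_adj Gr x y \<longleftrightarrow> power_adj Hr (f x) (f y)))"

definition elem_Z2_times_Zn :: "nat \<Rightarrow> nat \<Rightarrow> ((nat \<Rightarrow> int) \<times> int) monoid" where
  "elem_Z2_times_Zn m n =
     product_group {..<m} (\<lambda>_. integer_mod_group 2) \<times>\<times> integer_mod_group n"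

end

theory Submission
  imports Defs "HOL-Decision_Procs.Dense_Linear_Order"
begin

lemma (in group) gen_mem_iff:
  assumes "x \<in> carrier G" "w \<in> carrier G"
  shows "x \<in> generate G {w} \<longleftrightarrow> generate G {x} \<subseteq> generate G {w}"
proof
  assume "x \<in> generate G {w}"
  then show "generate G {x} \<subseteq> generate G {w}"
    using generate_subgroup_incl[of "{x}" "generate G {w}"] generate_is_subgroup[of "{w}"] assms by auto
next
  assume "generate G {x} \<subseteq> generate G {w}"
  then show "x \<in> generate G {w}" using generate.incl[of x "{x}" G] by auto
qed

lemma (in group) gen_inv_eq:
  assumes "x \<in> carrier G"
  shows "generate G {inv x} = generate G {x}"
proof
  have "inv x \<in> generate G {x}" using generate.inv[of x "{x}" G] by auto
  then show "generate G {inv x} \<subseteq> generate G {x}" using gen_mem_iff assms by auto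
  have "x \<in> generate G {inv x}" using generate.inv[of "inv x" "{inv x}" G] assms by auto
  then show "generate G {x} \<subseteq> generate G {inv x}" using gen_mem_iff assms by auto
qed

lemma (in group) one_adj:
  assumes "x \<in> carrier G" "x \<noteq> \<one>"
  shows "power_adj G \<one> x"
  using assms generate.one[of G "{x}"] unfolding power_adj_def by auto

lemma (in group) invol_gen:
  assumes "x \<in> carrier G" "x \<otimes> x = \<one>"
  shows "generate G {x} \<subseteq> {\<one>, x}"
proof
  have ix: "inv x = x" using assms inv_equality by blast
  fix y assume "y \<in> generate G {x}"
  then show "y \<in> {\<one>, x}"
  proof (induction rule: generate.induct)
    case one then show ?case by simp
  next
    case (incl h) then show ?case by simp
  next
    case (inv h) then show ?case using ix by auto
  next
    case (eng h1 h2) then show ?case using assms by auto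
  qed
qed

lemma (in group) twin_adj:
  assumes "u \<in> carrier G" "v \<in> carrier G" "w \<in> carrier G" "w \<noteq> u" "w \<noteq> v"
    and "generate G {u} = generate G {v}"
  shows "power_adj G u w \<longleftrightarrow> power_adj G v w"
  using assms gen_mem_iff[of u w] gen_mem_iff[of v w] unfolding power_adj_def by auto

lemma power_adj_sym: "power_adj G x y \<longleftrightarrow> power_adj G y x"
  unfolding power_adj_def by auto

lemma power_adj_irrefl: "\<not> power_adj G x x"
  unfolding power_adj_def by auto

definition swp :: "'a \<Rightarrow> 'a \<Rightarrow> 'a \<Rightarrow> 'a" where
  "swp u v y = (if y = u then v else if y = v then u else y)"

lemma swp_bij: "u \<in> B \<Longrightarrow> v \<in> B \<Longrightarrow> bij_betw (swp u v) B B"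
  unfolding bij_betw_def inj_on_def swp_def by (auto simp: image_def)

lemma swp_adj:
  assumes "u \<in> B" "v \<in> B"
    and symS: "\<And>p q. S p q \<longleftrightarrow> S q p" and irr: "\<And>p. \<not> S p p"
    and uu: "\<And>y. y \<in> B \<Longrightarrow> y \<noteq> u \<Longrightarrow> S u y"
    and uv: "\<And>y. y \<in> B \<Longrightarrow> y \<noteq> v \<Longrightarrow> S v y"
    and "p \<in> B" "q \<in> B"
  shows "S (swp u v p) (swp u v q) \<longleftrightarrow> S p q"
proof -
  have univ: "S a b \<longleftrightarrow> a \<noteq> b" if "a \<in> {u,v}" "b \<in> B" for a b
    using that uu uv irr by auto
  have univ2: "S b a \<longleftrightarrow> a \<noteq> b" if "a \<in> {u,v}" "b \<in> B" for a b
    using univ[OF that] symS by auto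
  have inB: "swp u v y \<in> B" if "y \<in> B" for y using that assms(1,2) unfolding swp_def by auto
  have inj: "swp u v p = swp u v q \<longleftrightarrow> p = q"
    unfolding swp_def by auto
  show ?thesis
  proof (cases "p \<in> {u,v}")
    case True
    then have "swp u v p \<in> {u,v}" unfolding swp_def by auto
    then show ?thesis using univ[OF True \<open>q \<in> B\<close>] univ[of "swp u v p" "swp u v q"] inB[OF \<open>q \<in> B\<close>] inj by auto
  next
    case False
    note pF = False
    show ?thesis
    proof (cases "q \<in> {u,v}")
      case True
      then have "swp u v q \<in> {u,v}" unfolding swp_def by auto
      then show ?thesis using univ2[OF True \<open>p \<in> B\<close>] univ2[of "swp u v q" "swp u v p"] inB[OF \<open>p \<in> B\<close>] inj by auto
    next
      case False
      then show ?thesis using pF unfolding swp_def by auto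
    qed
  qed
qed

lemma pow_DirProd_nat: "x [^]\<^bsub>G \<times>\<times> H\<^esub> (k::nat) = (fst x [^]\<^bsub>G\<^esub> k, snd x [^]\<^bsub>H\<^esub> k)"
  by (induction k) (auto simp: mult_DirProd')

lemma pow_product_group_nat: "x [^]\<^bsub>product_group I G\<^esub> (k::nat) = (\<lambda>i\<in>I. x i [^]\<^bsub>G i\<^esub> k)"
  by (induction k) (auto intro!: restrict_ext)

definition zV :: "nat \<Rightarrow> nat \<Rightarrow> int" where "zV m = (\<lambda>i\<in>{..<m}. 0)"

lemma carrier_HH: "n > 0 \<Longrightarrow> carrier (elem_Z2_times_Zn m n) = (\<Pi>\<^sub>E i\<in>{..<m}. {0..<2}) \<times> {0..<int n}"
  unfolding elem_Z2_times_Zn_def by (simp add: carrier_integer_mod_group)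

lemma one_HH: "\<one>\<^bsub>elem_Z2_times_Zn m n\<^esub> = (zV m, 0)"
  unfolding elem_Z2_times_Zn_def zV_def by simp

lemma group_HH: "group (elem_Z2_times_Zn m n)"
  unfolding elem_Z2_times_Zn_def by (intro DirProd_group product_group) auto

lemma finite_HH: "n > 0 \<Longrightarrow> finite (carrier (elem_Z2_times_Zn m n))"
  by (simp add: carrier_HH finite_PiE)

lemma card_HH: "n > 0 \<Longrightarrow> card (carrier (elem_Z2_times_Zn m n)) = 2^m * n"
  by (simp add: carrier_HH card_PiE card_cartesian_product)

lemma pow_HH: "(a, b) [^]\<^bsub>elem_Z2_times_Zn m n\<^esub> (k::nat) = ((\<lambda>i\<in>{..<m}. (int k * a i) mod 2), (int k * b) mod int n)"
  unfolding elem_Z2_times_Zn_def pow_DirProd_nat pow_product_group_nat by simp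

lemma gen_HH:
  assumes "n > 0" "v \<in> carrier (elem_Z2_times_Zn m n)"
  shows "w \<in> generate (elem_Z2_times_Zn m n) {v} \<longleftrightarrow> (\<exists>k::nat. w = v [^]\<^bsub>elem_Z2_times_Zn m n\<^esub> k)"
proof -
  interpret H: group "elem_Z2_times_Zn m n" by (rule group_HH)
  have "H.ord v \<ge> 1" using H.ord_ge_1[OF finite_HH[OF assms(1)] assms(2)] .
  then have "H.ord v \<noteq> 0" by auto
  from H.generate_pow_nat[OF assms(2) this] show ?thesis by auto
qed

lemma mod2_mult: "x \<in> {0..<2::int} \<Longrightarrow> (int k * x) mod 2 = (if even k then 0 else x)"
proof -
  assume "x \<in> {0..<2::int}"
  then have "x = 0 \<or> x = 1" by auto
  moreover have "(int k) mod 2 = (if even k then 0 else 1)"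
    by (cases "even k") (auto elim!: evenE oddE)
  ultimately show ?thesis by auto
qed

lemma fun_mod2_pow:
  assumes "a \<in> (\<Pi>\<^sub>E i\<in>{..<m}. {0..<2::int})"
  shows "(\<lambda>i\<in>{..<m}. (int k * a i) mod 2) = (if even k then zV m else a)"
proof -
  have "a i = undefined" if "i \<notin> {..<m}" for i by (rule PiE_arb[OF assms that])
  then show ?thesis using assms unfolding zV_def
    by (auto simp: PiE_iff mod2_mult intro!: ext)
qed

lemma zV_in: "zV m \<in> (\<Pi>\<^sub>E i\<in>{..<m}. {0..<2::int})"
  unfolding zV_def by auto

lemma adj_HH_fst:
  assumes n: "n > 0" and a: "a \<in> (\<Pi>\<^sub>E i\<in>{..<m}. {0..<2})" "a \<noteq> zV m" and b: "b \<in> {0..<int n}"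
    and w: "w \<in> carrier (elem_Z2_times_Zn m n)"
    and adj: "power_adj (elem_Z2_times_Zn m n) (a, b) w"
  shows "fst w \<in> {zV m, a}"
proof -
  have ab: "(a,b) \<in> carrier (elem_Z2_times_Zn m n)" using a b n carrier_HH by auto
  obtain w1 w2 where ww: "w = (w1, w2)" by (cases w)
  have w1: "w1 \<in> (\<Pi>\<^sub>E i\<in>{..<m}. {0..<2})" using w ww carrier_HH[OF n] by auto
  from adj have "w \<in> generate (elem_Z2_times_Zn m n) {(a,b)} \<or> (a,b) \<in> generate (elem_Z2_times_Zn m n) {w}"
    unfolding power_adj_def by auto
  then show ?thesis
  proof
    assume "w \<in> generate (elem_Z2_times_Zn m n) {(a,b)}"
    then obtain k :: nat where "w = (a,b) [^]\<^bsub>elem_Z2_times_Zn m n\<^esub> k" using iffD1[OF gen_HH[OF n ab]] by blast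
    then show ?thesis using fun_mod2_pow[OF a(1), of k] by (auto simp: pow_HH split: if_splits)
  next
    assume "(a,b) \<in> generate (elem_Z2_times_Zn m n) {w}"
    then obtain k :: nat where "(a,b) = w [^]\<^bsub>elem_Z2_times_Zn m n\<^esub> k" using iffD1[OF gen_HH[OF n w]] by blast
    then have "a = (if even k then zV m else w1)" using fun_mod2_pow[OF w1, of k] ww by (simp add: pow_HH)
    then show ?thesis using ww a(2) by (auto split: if_splits)
  qed
qed

lemma HH_P2:
  assumes n: "n > 0" "odd n" and a: "a \<in> (\<Pi>\<^sub>E i\<in>{..<m}. {0..<2})" and b: "b \<in> {0..<int n}" "b \<noteq> 0"
  shows "power_adj (elem_Z2_times_Zn m n) (a, b) (a, 0)"
proof -
  have ab: "(a,b) \<in> carrier (elem_Z2_times_Zn m n)" "(a,0) \<in> carrier (elem_Z2_times_Zn m n)"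
    using a b n carrier_HH by auto
  have "(a,0) = (a,b) [^]\<^bsub>elem_Z2_times_Zn m n\<^esub> n"
    using fun_mod2_pow[OF a, of n] n by (simp add: pow_HH)
  then have "(a,0) \<in> generate (elem_Z2_times_Zn m n) {(a,b)}" using gen_HH[OF n(1) ab(1)] by blast
  then show ?thesis using ab b unfolding power_adj_def by auto
qed

lemma HH_P3:
  assumes n: "n > 0" "odd n" and a: "a \<in> (\<Pi>\<^sub>E i\<in>{..<m}. {0..<2})" "a \<noteq> zV m" and b: "b \<in> {0..<int n}"
  shows "power_adj (elem_Z2_times_Zn m n) (a, b) (zV m, b)"
proof -
  have ab: "(a,b) \<in> carrier (elem_Z2_times_Zn m n)" "(zV m,b) \<in> carrier (elem_Z2_times_Zn m n)"
    using a b n carrier_HH zV_in by auto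
  define k where "k = n + 1"
  have e: "even k" using n unfolding k_def by auto
  have "(int k * b) mod int n = b" using b unfolding k_def by (simp add: algebra_simps)
  then have "(zV m,b) = (a,b) [^]\<^bsub>elem_Z2_times_Zn m n\<^esub> k"
    using fun_mod2_pow[OF a(1), of k] e by (simp only: pow_HH) simp
  then have "(zV m,b) \<in> generate (elem_Z2_times_Zn m n) {(a,b)}" using gen_HH[OF n(1) ab(1)] by blast
  then show ?thesis using ab a unfolding power_adj_def by auto
qed

lemma HH_P4:
  assumes n: "n > 0" and a: "a \<in> (\<Pi>\<^sub>E i\<in>{..<m}. {0..<2})" "a \<noteq> zV m" and b: "b \<in> {0..<int n}" "b \<noteq> 0"
  shows "\<not> power_adj (elem_Z2_times_Zn m n) (a, 0) (zV m, b)"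
proof
  assume adj: "power_adj (elem_Z2_times_Zn m n) (a, 0) (zV m, b)"
  have ab: "(a,0) \<in> carrier (elem_Z2_times_Zn m n)" "(zV m,b) \<in> carrier (elem_Z2_times_Zn m n)"
    using a b n carrier_HH zV_in by auto
  from adj have "(zV m, b) \<in> generate (elem_Z2_times_Zn m n) {(a,0)} \<or> (a,0) \<in> generate (elem_Z2_times_Zn m n) {(zV m, b)}"
    unfolding power_adj_def by auto
  then show False
  proof
    assume "(zV m, b) \<in> generate (elem_Z2_times_Zn m n) {(a,0)}"
    then obtain k :: nat where "(zV m, b) = (a,0) [^]\<^bsub>elem_Z2_times_Zn m n\<^esub> k" using iffD1[OF gen_HH[OF n ab(1)]] by blast
    then show False using b by (simp add: pow_HH)
  next
    assume "(a,0) \<in> generate (elem_Z2_times_Zn m n) {(zV m, b)}"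
    then obtain k :: nat where "(a,0) = (zV m, b) [^]\<^bsub>elem_Z2_times_Zn m n\<^esub> k" using iffD1[OF gen_HH[OF n ab(2)]] by blast
    then show False using fun_mod2_pow[OF zV_in[of m], of k] a by (simp add: pow_HH split: if_splits)
  qed
qed

lemma HH_P5:
  assumes n: "n > 0" and a: "a \<in> (\<Pi>\<^sub>E i\<in>{..<m}. {0..<2})" "a \<noteq> zV m"
    and w: "w \<in> carrier (elem_Z2_times_Zn m n)" "w \<noteq> (zV m, 0)"
    and adj: "power_adj (elem_Z2_times_Zn m n) (a, 0) w"
  shows "fst w = a"
proof -
  obtain w1 w2 where ww: "w = (w1, w2)" by (cases w)
  have w2: "w2 \<in> {0..<int n}" using w ww carrier_HH[OF n] by auto
  have "fst w \<in> {zV m, a}" using adj_HH_fst[OF n a _ w(1) adj] n by auto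
  moreover have "fst w \<noteq> zV m"
  proof
    assume "fst w = zV m"
    then have "w = (zV m, w2)" "w2 \<noteq> 0" using ww w by auto
    then show False using HH_P4[OF n a w2] adj by auto
  qed
  ultimately show ?thesis by auto
qed

lemma HH_P6:
  assumes n: "n > 0" "odd n" and a: "a \<in> (\<Pi>\<^sub>E i\<in>{..<m}. {0..<2})" "a \<noteq> zV m" and b: "b \<in> {0..<int n}"
  shows "power_adj (elem_Z2_times_Zn m n) (a, 1 mod int n) (zV m, b)"
proof -
  have ab: "(a,1 mod int n) \<in> carrier (elem_Z2_times_Zn m n)" "(zV m,b) \<in> carrier (elem_Z2_times_Zn m n)"
    using a b n carrier_HH zV_in by auto
  define k where "k = (n+1) * nat b"
  have e: "even k" using n unfolding k_def by auto
  have "(int k * (1 mod int n)) mod int n = (int k) mod int n" by (simp add: mod_mult_right_eq)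
  also have "\<dots> = (int n * b + b) mod int n" using b unfolding k_def by (simp add: algebra_simps)
  also have "\<dots> = b" using b by simp
  finally have "(zV m,b) = (a,1 mod int n) [^]\<^bsub>elem_Z2_times_Zn m n\<^esub> k"
    using fun_mod2_pow[OF a(1), of k] e by (simp add: pow_HH)
  then have "(zV m,b) \<in> generate (elem_Z2_times_Zn m n) {(a,1 mod int n)}" using gen_HH[OF n(1) ab(1)] by blast
  then show ?thesis using ab a unfolding power_adj_def by auto
qed

locale GTl = group G for G :: "('a, 'b) monoid_scheme" (structure) +
  fixes T :: "'a set" and c :: 'a and n :: nat
  assumes n_odd: "odd n" and n_pos: "n > 0" and c_in: "c \<in> carrier G" and ordc: "ord c = n"
    and T_sub: "T \<subseteq> carrier G" and one_T: "\<one> \<in> T"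
    and T_inv: "\<And>t. t \<in> T \<Longrightarrow> t \<otimes> t = \<one>"
    and T_comm: "\<And>t. t \<in> T \<Longrightarrow> t \<otimes> c = c \<otimes> t"
begin

lemma T_in: "t \<in> T \<Longrightarrow> t \<in> carrier G" using T_sub by auto

lemma T_inv_eq: "t \<in> T \<Longrightarrow> inv t = t"
  using T_inv T_in inv_equality by blast

lemma cn: "c [^] n = \<one>" using pow_ord_eq_1[OF c_in] ordc by simp

lemma comm_cpow: "t \<in> T \<Longrightarrow> t \<otimes> c [^] (k::nat) = c [^] k \<otimes> t"
  using group_commutes_pow[of c t k] T_comm[of t] c_in T_in[of t] by auto

lemma cpow_n: "(c [^] (k::nat)) [^] n = \<one>"
proof -
  have "(c [^] k) [^] n = (c [^] n) [^] k" using c_in by (simp add: nat_pow_pow mult.commute)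
  then show ?thesis using cn by simp
qed

lemma cpow_mod: "c [^] (k::nat) = c [^] (k mod n)"
proof -
  have "c [^] k = c [^] (n * (k div n) + k mod n)" by simp
  also have "\<dots> = (c [^] n) [^] (k div n) \<otimes> c [^] (k mod n)"
    using c_in by (simp add: nat_pow_mult nat_pow_pow)
  also have "\<dots> = c [^] (k mod n)" using c_in cn by simp
  finally show ?thesis .
qed

lemma cpow_root:
  assumes "(c [^] (k::nat)) [^] (e::nat) = \<one>" "coprime e n"
  shows "c [^] k = \<one>"
proof -
  have "c [^] (k * e) = \<one>" using assms(1) c_in by (simp add: nat_pow_pow)
  then have "n dvd k * e" using pow_eq_id[OF c_in] ordc by simp
  then have "n dvd k" using assms(2)
    by (metis coprime_commute coprime_dvd_mult_left_iff)
  then show ?thesis using pow_eq_id[OF c_in] ordc by simp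
qed

lemma cpow_inj:
  assumes "c [^] (k::nat) = c [^] (k'::nat)" "k < n" "k' < n"
  shows "k = k'"
proof -
  have "c [^] (int k) = c [^] (int k')" using assms(1) by (simp add: int_pow_int)
  then have "int n dvd int k' - int k" using int_pow_eq[OF c_in] ordc by simp
  then have "int k' - int k = 0" using assms(2,3)
    by (cases "int k' - int k = 0") (use dvd_imp_le_int[of "int k' - int k" "int n"] in auto)
  then show ?thesis by simp
qed

lemma T_pow_odd: "t \<in> T \<Longrightarrow> odd (e::nat) \<Longrightarrow> t [^] e = t"
proof -
  assume t: "t \<in> T" and e: "odd e"
  then obtain q where q: "e = 2 * q + 1" by (auto elim!: oddE)
  have "t [^] e = (t [^] (2::nat)) [^] q \<otimes> t" using T_in[OF t] q by (simp add: nat_pow_mult nat_pow_pow)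
  also have "t [^] (2::nat) = \<one>" using T_in[OF t] T_inv[OF t] by (simp add: numeral_2_eq_2)
  finally show ?thesis using T_in[OF t] by simp
qed

lemma T_pow_even: "t \<in> T \<Longrightarrow> even (e::nat) \<Longrightarrow> t [^] e = \<one>"
proof -
  assume t: "t \<in> T" and e: "even e"
  then obtain q where q: "e = 2 * q" by (auto elim!: evenE)
  have "t [^] e = (t [^] (2::nat)) [^] q" using T_in[OF t] q by (simp add: nat_pow_pow)
  also have "t [^] (2::nat) = \<one>" using T_in[OF t] T_inv[OF t] by (simp add: numeral_2_eq_2)
  finally show ?thesis by simp
qed

lemma mu_pow: "t \<in> T \<Longrightarrow> (t \<otimes> c [^] (k::nat)) [^] n = t"
proof -
  assume t: "t \<in> T"
  have "(t \<otimes> c [^] k) [^] n = t [^] n \<otimes> (c [^] k) [^] n"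
    using pow_mult_distrib[OF comm_cpow[OF t]] T_in[OF t] c_in by simp
  then show ?thesis using T_pow_odd[OF t n_odd] cpow_n T_in[OF t] by simp
qed

lemma mu_inj:
  assumes "t \<in> T" "t' \<in> T" "t \<otimes> c [^] (k::nat) = t' \<otimes> c [^] (k'::nat)"
  shows "t = t'" "c [^] k = c [^] k'"
proof -
  show "t = t'" using mu_pow[OF assms(1), of k] mu_pow[OF assms(2), of k'] assms(3) by simp
  then show "c [^] k = c [^] k'" using assms T_in c_in by simp
qed

lemma conj_pow:
  assumes "t \<in> T" "x \<in> carrier G"
  shows "(t \<otimes> x \<otimes> t) [^] (j::nat) = t \<otimes> x [^] j \<otimes> t"
proof (induction j)
  case 0 then show ?case using assms T_in T_inv by simp
next
  case (Suc j)
  have t: "t \<in> carrier G" using T_in assms by auto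
  have "(t \<otimes> x \<otimes> t) [^] Suc j = (t \<otimes> x [^] j \<otimes> t) \<otimes> (t \<otimes> x \<otimes> t)" using Suc by simp
  also have "\<dots> = t \<otimes> x [^] j \<otimes> (t \<otimes> t) \<otimes> x \<otimes> t" using t assms by (simp add: m_assoc)
  also have "\<dots> = t \<otimes> x [^] Suc j \<otimes> t" using t assms T_inv[OF assms(1)] by (simp add: m_assoc)
  finally show ?case .
qed

end

locale GTl2 = GTl G T c n for G :: "('a, 'b) monoid_scheme" (structure) and T c n +
  fixes m :: nat
  assumes fin: "finite (carrier G)" and cardG: "card (carrier G) = 2^m * n" and cardT: "card T = 2^m"
begin

lemma finT: "finite T" using T_sub fin finite_subset by auto

lemma mu_surj:
  assumes g: "g \<in> carrier G"
  shows "\<exists>t\<in>T. \<exists>k<n. g = t \<otimes> c [^] k"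
proof -
  let ?mu = "\<lambda>(t, k::nat). t \<otimes> c [^] k"
  have inj: "inj_on ?mu (T \<times> {..<n})"
  proof (rule inj_onI)
    fix x y assume x: "x \<in> T \<times> {..<n}" and y: "y \<in> T \<times> {..<n}" and e: "?mu x = ?mu y"
    obtain t k where xx: "x = (t,k)" by (cases x)
    obtain t' k' where yy: "y = (t',k')" by (cases y)
    have "t \<otimes> c [^] k = t' \<otimes> c [^] k'" using e xx yy by simp
    then show "x = y" using mu_inj[of t t' k k'] cpow_inj[of k k'] x y xx yy by auto
  qed
  have "card (?mu ` (T \<times> {..<n})) = card (carrier G)"
    using card_image[OF inj] cardT cardG finT by (simp add: card_cartesian_product)
  moreover have "?mu ` (T \<times> {..<n}) \<subseteq> carrier G" using T_in c_in by auto
  ultimately have "?mu ` (T \<times> {..<n}) = carrier G" using card_subset_eq fin by blast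
  then show ?thesis using g by force
qed

lemma T_closed:
  assumes t: "t \<in> T" and t': "t' \<in> T"
  shows "t \<otimes> t' \<in> T"
proof -
  have tc: "t \<in> carrier G" "t' \<in> carrier G" using t t' T_in by auto
  define u where "u = t \<otimes> t'"
  have u: "u \<in> carrier G" using tc u_def by simp
  obtain s k where s: "s \<in> T" "k < n" and us: "u = s \<otimes> c [^] k" using mu_surj[OF u] by auto
  define v where "v = c [^] k"
  have v: "v \<in> carrier G" using c_in v_def by simp
  have sc: "s \<in> carrier G" using s T_in by auto
  have "u [^] (n+1) = s [^] (n+1) \<otimes> v [^] (n+1)"
    unfolding us v_def by (rule pow_mult_distrib[OF comm_cpow[OF s(1)]]) (use sc c_in in auto)
  also have "s [^] (n+1) = \<one>" by (rule T_pow_even[OF s(1)]) (use n_odd in simp)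
  also have "v [^] (n+1) = v [^] n \<otimes> v" by simp
  also have "\<dots> = v" using cpow_n v v_def by simp
  finally have uv: "u [^] (n+1) = v" using v by simp
  have "t \<otimes> u \<otimes> t = t' \<otimes> t" using tc T_inv[OF t] u_def by (simp add: m_assoc[symmetric])
  also have "\<dots> = inv u" using tc u_def T_inv_eq[OF t] T_inv_eq[OF t'] by (simp add: inv_mult_group)
  finally have tut: "t \<otimes> u \<otimes> t = inv u" .
  have "t \<otimes> v \<otimes> t = (t \<otimes> u \<otimes> t) [^] (n+1)" by (simp only: conj_pow[OF t u] uv)
  also have "\<dots> = inv v" by (simp only: tut nat_pow_inv[OF u] uv)
  finally have "t \<otimes> v \<otimes> t = inv v" .
  moreover have "t \<otimes> v \<otimes> t = v" using comm_cpow[OF t, of k] v_def tc v T_inv[OF t] by (simp add: m_assoc)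
  ultimately have "v = inv v" by simp
  then have "v \<otimes> v = \<one>" using v by (metis r_inv)
  then have "(c [^] k) [^] (2::nat) = \<one>" using v v_def by (simp add: numeral_2_eq_2)
  then have "c [^] k = \<one>" using cpow_root[of k 2] n_odd by simp
  then have "u = s" using us sc by simp
  then show ?thesis using s u_def by simp
qed

lemma T_comm2:
  assumes t: "t \<in> T" and t': "t' \<in> T"
  shows "t \<otimes> t' = t' \<otimes> t"
proof -
  have tc: "t \<in> carrier G" "t' \<in> carrier G" using t t' T_in by auto
  have "t \<otimes> t' = inv (t \<otimes> t')" using T_inv_eq[OF T_closed[OF t t']] by simp
  also have "\<dots> = t' \<otimes> t" using tc T_inv_eq[OF t] T_inv_eq[OF t'] by (simp add: inv_mult_group)
  finally show ?thesis .
qed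

end

fun phiT :: "('a, 'b) monoid_scheme \<Rightarrow> (nat \<Rightarrow> 'a) \<Rightarrow> nat \<Rightarrow> (nat \<Rightarrow> int) \<Rightarrow> 'a" where
  "phiT G g 0 a = \<one>\<^bsub>G\<^esub>"
| "phiT G g (Suc j) a = phiT G g j a \<otimes>\<^bsub>G\<^esub> (if a j = 1 then g j else \<one>\<^bsub>G\<^esub>)"

context GTl2 begin

lemma phi_T: "(\<And>i. i < j \<Longrightarrow> g i \<in> T) \<Longrightarrow> phiT G g j a \<in> T"
  by (induction j) (auto simp: one_T T_closed)

lemma phi_cong: "(\<And>i. i < j \<Longrightarrow> a i = a' i) \<Longrightarrow> phiT G g j a = phiT G g j a'"
  by (induction j) auto

lemma phi_cong_g: "(\<And>i. i < j \<Longrightarrow> g i = g' i) \<Longrightarrow> phiT G g j a = phiT G g' j a"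
  by (induction j) auto

lemma phi_add:
  assumes "\<And>i. i < j \<Longrightarrow> g i \<in> T" "\<And>i. i < j \<Longrightarrow> a i \<in> {0..<2}" "\<And>i. i < j \<Longrightarrow> a' i \<in> {0..<2}"
  shows "phiT G g j (\<lambda>i. (a i + a' i) mod 2) = phiT G g j a \<otimes> phiT G g j a'"
  using assms
proof (induction j)
  case 0 then show ?case by simp
next
  case (Suc j)
  let ?e = "\<lambda>x. if x = (1::int) then g j else \<one>"
  have gj: "g j \<in> T" using Suc by auto
  have E: "?e x \<in> T" for x using gj one_T by auto
  have aj: "a j \<in> {0..<2}" "a' j \<in> {0..<2}" using Suc by auto
  have Eadd: "?e ((a j + a' j) mod 2) = ?e (a j) \<otimes> ?e (a' j)"
    using aj T_inv[OF gj] T_in[OF gj] by auto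
  define P where "P = phiT G g j a"
  define P' where "P' = phiT G g j a'"
  have P: "P \<in> T" "P' \<in> T" unfolding P_def P'_def using phi_T Suc.prems by auto
  have IH: "phiT G g j (\<lambda>i. (a i + a' i) mod 2) = P \<otimes> P'" unfolding P_def P'_def
    using Suc by auto
  have "phiT G g (Suc j) (\<lambda>i. (a i + a' i) mod 2) = (P \<otimes> P') \<otimes> (?e (a j) \<otimes> ?e (a' j))"
    using IH Eadd by simp
  also have "\<dots> = P \<otimes> (P' \<otimes> ?e (a j)) \<otimes> ?e (a' j)"
    using P E T_in by (simp add: m_assoc)
  also have "P' \<otimes> ?e (a j) = ?e (a j) \<otimes> P'" using T_comm2[OF P(2) E] by simp
  also have "P \<otimes> (?e (a j) \<otimes> P') \<otimes> ?e (a' j) = (P \<otimes> ?e (a j)) \<otimes> (P' \<otimes> ?e (a' j))"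
    using P E T_in by (simp add: m_assoc)
  finally show ?case unfolding P_def P'_def by simp
qed

lemma phi_exists:
  "j \<le> m \<Longrightarrow> \<exists>g. (\<forall>i<j. g i \<in> T) \<and> inj_on (phiT G g j) ({..<j} \<rightarrow>\<^sub>E {0..<2::int})"
proof (induction j)
  case 0
  have "{..<0::nat} \<rightarrow>\<^sub>E {0..<2::int} = {\<lambda>_. undefined}" by auto
  then show ?case by auto
next
  case (Suc j)
  then obtain g where g: "\<forall>i<j. g i \<in> T" and inj: "inj_on (phiT G g j) ({..<j} \<rightarrow>\<^sub>E {0..<2::int})" by auto
  let ?A = "{..<j} \<rightarrow>\<^sub>E {0..<2::int}"
  have cardA: "card ?A = 2^j" by (simp add: card_PiE)
  have IT: "phiT G g j ` ?A \<subseteq> T" using phi_T g by auto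
  have "card (phiT G g j ` ?A) = 2^j" using card_image[OF inj] cardA by simp
  moreover have "(2::nat)^j < 2^m" using Suc.prems by simp
  ultimately have "card (phiT G g j ` ?A) < card T" using cardT by simp
  moreover have "finite (phiT G g j ` ?A)" by (intro finite_imageI finite_PiE) auto
  ultimately have "\<not> T \<subseteq> phiT G g j ` ?A" by (meson card_mono leD)
  then obtain g' where g': "g' \<in> T" "g' \<notin> phiT G g j ` ?A" by auto
  define g2 where "g2 = g(j := g')"
  have g2T: "\<forall>i<Suc j. g2 i \<in> T" using g g' unfolding g2_def by (auto simp: less_Suc_eq)
  have phij: "phiT G g2 j a = phiT G g j (restrict a {..<j})" for a
  proof -
    have "phiT G g2 j a = phiT G g j a" by (rule phi_cong_g) (simp add: g2_def)
    also have "\<dots> = phiT G g j (restrict a {..<j})" by (rule phi_cong) simp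
    finally show ?thesis .
  qed
  have key: False if a: "a \<in> ?A" "a' \<in> ?A" and e: "phiT G g j a \<otimes> g' = phiT G g j a'" for a a'
  proof -
    have Pa: "phiT G g j a \<in> T" "phiT G g j a' \<in> T" using phi_T g by auto
    have c1: "phiT G g j a \<in> carrier G" "g' \<in> carrier G" using Pa g' T_in by auto
    have "inv (phiT G g j a) \<otimes> phiT G g j a' = inv (phiT G g j a) \<otimes> (phiT G g j a \<otimes> g')"
      using e by simp
    also have "\<dots> = g'" using c1 by (simp add: m_assoc[symmetric])
    finally have "g' = inv (phiT G g j a) \<otimes> phiT G g j a'" by simp
    also have "\<dots> = phiT G g j a \<otimes> phiT G g j a'" using T_inv_eq Pa by simp
    also have "\<dots> = phiT G g j (\<lambda>i. (a i + a' i) mod 2)"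
      using phi_add[of j g a a'] g a by (auto simp: PiE_iff)
    also have "\<dots> = phiT G g j (\<lambda>i\<in>{..<j}. (a i + a' i) mod 2)" by (rule phi_cong) simp
    finally have "g' \<in> phiT G g j ` ?A" by auto
    then show False using g' by simp
  qed
  have "inj_on (phiT G g2 (Suc j)) ({..<Suc j} \<rightarrow>\<^sub>E {0..<2::int})"
  proof (rule inj_onI)
    fix a a' assume a: "a \<in> {..<Suc j} \<rightarrow>\<^sub>E {0..<2::int}" and a': "a' \<in> {..<Suc j} \<rightarrow>\<^sub>E {0..<2::int}"
      and e: "phiT G g2 (Suc j) a = phiT G g2 (Suc j) a'"
    have ra: "restrict a {..<j} \<in> ?A" "restrict a' {..<j} \<in> ?A" using a a' by (auto simp: PiE_iff)
    have "a j \<in> {0..<2}" "a' j \<in> {0..<2}" using a a' by (auto simp: PiE_iff)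
    then have aj: "a j \<in> {0,1}" "a' j \<in> {0,1}" by auto
    have e2: "phiT G g j (restrict a {..<j}) \<otimes> (if a j = 1 then g' else \<one>) =
              phiT G g j (restrict a' {..<j}) \<otimes> (if a' j = 1 then g' else \<one>)"
    proof -
      have "phiT G g2 (Suc j) x = phiT G g j (restrict x {..<j}) \<otimes> (if x j = 1 then g' else \<one>)" for x
        using phij[of x] by (simp add: g2_def)
      then show ?thesis using e by metis
    qed
    have Pa: "phiT G g j (restrict a {..<j}) \<in> carrier G" "phiT G g j (restrict a' {..<j}) \<in> carrier G"
      using phi_T g T_in by auto
    have ajj: "a j = a' j"
    proof (rule ccontr)
      assume "a j \<noteq> a' j"
      then consider "a j = 1" "a' j = 0" | "a j = 0" "a' j = 1" using aj by auto
      then show False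
      proof cases
        case 1 then show False using key[OF ra(1) ra(2)] e2 Pa by simp
      next
        case 2 then show False using key[OF ra(2) ra(1)] e2 Pa by simp
      qed
    qed
    then have "phiT G g j (restrict a {..<j}) = phiT G g j (restrict a' {..<j})"
      using e2 Pa g' T_in by (auto split: if_splits)
    then have "restrict a {..<j} = restrict a' {..<j}" using inj ra by (simp add: inj_on_def)
    then have "\<forall>i<j. a i = a' i" by (metis lessThan_iff restrict_apply')
    then show "a = a'" using ajj a a' by (intro PiE_ext[OF a a']) (auto simp: less_Suc_eq)
  qed
  then show ?case using g2T by blast
qed

end

context GTl2 begin

theorem GT_iso: "G \<cong> elem_Z2_times_Zn m n"
proof -
  let ?A = "{..<m} \<rightarrow>\<^sub>E {0..<2::int}"
  let ?H = "elem_Z2_times_Zn m n"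
  obtain g where gT: "\<forall>i<m. g i \<in> T" and inj: "inj_on (phiT G g m) ?A" using phi_exists[of m] by auto
  define \<Phi> where "\<Phi> = phiT G g m"
  have PhiT: "\<Phi> a \<in> T" for a using phi_T gT unfolding \<Phi>_def by auto
  have PhiC: "\<Phi> a \<in> carrier G" for a using PhiT T_in by auto
  define \<Psi> where "\<Psi> = (\<lambda>(a, b). \<Phi> a \<otimes> c [^] (nat b))"
  have carH: "carrier ?H = ?A \<times> {0..<int n}" using carrier_HH n_pos by auto
  have Psi_in: "\<Psi> x \<in> carrier G" for x unfolding \<Psi>_def using PhiC c_in by (auto split: prod.splits)
  have Phi_add: "\<Phi> (\<lambda>i\<in>{..<m}. (a i + a' i) mod 2) = \<Phi> a \<otimes> \<Phi> a'" if "a \<in> ?A" "a' \<in> ?A" for a a'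
  proof -
    have "\<Phi> (\<lambda>i\<in>{..<m}. (a i + a' i) mod 2) = \<Phi> (\<lambda>i. (a i + a' i) mod 2)"
      unfolding \<Phi>_def by (rule phi_cong) simp
    also have "\<dots> = \<Phi> a \<otimes> \<Phi> a'" unfolding \<Phi>_def using phi_add[of m g a a'] gT that by (auto simp: PiE_iff)
    finally show ?thesis .
  qed
  have hom: "\<Psi> \<in> hom ?H G"
  proof (rule homI)
    fix x assume "x \<in> carrier ?H" then show "\<Psi> x \<in> carrier G" using Psi_in by simp
  next
    fix x y assume x: "x \<in> carrier ?H" and y: "y \<in> carrier ?H"
    obtain a b where xx: "x = (a,b)" by (cases x)
    obtain a' b' where yy: "y = (a',b')" by (cases y)
    have a: "a \<in> ?A" "b \<in> {0..<int n}" using x xx carH by auto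
    have a': "a' \<in> ?A" "b' \<in> {0..<int n}" using y yy carH by auto
    have xy: "x \<otimes>\<^bsub>?H\<^esub> y = ((\<lambda>i\<in>{..<m}. (a i + a' i) mod 2), (b + b') mod int n)"
      unfolding xx yy elem_Z2_times_Zn_def by simp
    have nb: "nat ((b + b') mod int n) = (nat b + nat b') mod n"
      using a(2) a'(2) by (simp add: nat_mod_distrib nat_add_distrib)
    have "\<Psi> (x \<otimes>\<^bsub>?H\<^esub> y) = (\<Phi> a \<otimes> \<Phi> a') \<otimes> c [^] ((nat b + nat b') mod n)"
      unfolding xy \<Psi>_def using Phi_add[OF a(1) a'(1)] nb by simp
    also have "c [^] ((nat b + nat b') mod n) = c [^] nat b \<otimes> c [^] nat b'"
      using cpow_mod[of "nat b + nat b'"] c_in by (simp add: nat_pow_mult)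
    also have "(\<Phi> a \<otimes> \<Phi> a') \<otimes> (c [^] nat b \<otimes> c [^] nat b') = \<Phi> a \<otimes> (\<Phi> a' \<otimes> c [^] nat b) \<otimes> c [^] nat b'"
      using PhiC c_in by (simp add: m_assoc)
    also have "\<Phi> a' \<otimes> c [^] nat b = c [^] nat b \<otimes> \<Phi> a'" using comm_cpow[OF PhiT] by simp
    also have "\<Phi> a \<otimes> (c [^] nat b \<otimes> \<Phi> a') \<otimes> c [^] nat b' = \<Psi> x \<otimes> \<Psi> y"
      unfolding \<Psi>_def xx yy using PhiC c_in by (simp add: m_assoc)
    finally show "\<Psi> (x \<otimes>\<^bsub>?H\<^esub> y) = \<Psi> x \<otimes> \<Psi> y" .
  qed
  have injP: "inj_on \<Psi> (carrier ?H)"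
  proof (rule inj_onI)
    fix x y assume x: "x \<in> carrier ?H" and y: "y \<in> carrier ?H" and e: "\<Psi> x = \<Psi> y"
    obtain a b where xx: "x = (a,b)" by (cases x)
    obtain a' b' where yy: "y = (a',b')" by (cases y)
    have a: "a \<in> ?A" "b \<in> {0..<int n}" using x xx carH by auto
    have a': "a' \<in> ?A" "b' \<in> {0..<int n}" using y yy carH by auto
    have e': "\<Phi> a \<otimes> c [^] nat b = \<Phi> a' \<otimes> c [^] nat b'" using e xx yy \<Psi>_def by simp
    have "\<Phi> a = \<Phi> a'" using mu_inj(1)[OF PhiT PhiT e'] .
    then have "a = a'" using inj a(1) a'(1) unfolding \<Phi>_def inj_on_def by blast
    moreover have "c [^] nat b = c [^] nat b'" using mu_inj(2)[OF PhiT PhiT e'] .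
    then have "nat b = nat b'" using cpow_inj a(2) a'(2) by auto
    then have "b = b'" using a(2) a'(2) by auto
    ultimately show "x = y" using xx yy by simp
  qed
  have "card (\<Psi> ` carrier ?H) = card (carrier G)"
    using card_image[OF injP] card_HH[OF n_pos] cardG by simp
  moreover have "\<Psi> ` carrier ?H \<subseteq> carrier G" using Psi_in by auto
  ultimately have "\<Psi> ` carrier ?H = carrier G" using card_subset_eq fin by blast
  then have "bij_betw \<Psi> (carrier ?H) (carrier G)" using injP by (simp add: bij_betw_def)
  then have "\<Psi> \<in> iso ?H G" using hom by (simp add: iso_def)
  then have "?H \<cong> G" by (rule is_isoI)
  then show ?thesis using group.iso_sym[OF group_HH] by blast
qed

end

lemma (in group) pow_mod_ord: "x \<in> carrier G \<Longrightarrow> x [^] (k::nat) = x [^] (k mod ord x)"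
proof -
  assume x: "x \<in> carrier G"
  have e1: "x [^] (ord x * (k div ord x)) = \<one>" using nat_pow_pow[OF x, of "ord x" "k div ord x"] x by simp
  have e2: "x [^] k = x [^] (ord x * (k div ord x)) \<otimes> x [^] (k mod ord x)"
    using nat_pow_mult[OF x, of "ord x * (k div ord x)" "k mod ord x"] by simp
  show ?thesis using e1 e2 x by simp
qed

lemma (in group) gen_nat_pow:
  assumes "finite (carrier G)" "x \<in> carrier G" "y \<in> generate G {x}"
  shows "\<exists>i. i < ord x \<and> y = x [^] i"
proof -
  have "ord x \<ge> 1" using ord_ge_1 assms by auto
  then have o: "ord x \<noteq> 0" by simp
  have "y \<in> {x [^] k | k. k \<in> (UNIV::nat set)}" using generate_pow_nat[OF assms(2) o] assms(3) by simp
  then obtain k :: nat where k: "y = x [^] k" by blast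
  then have "y = x [^] (k mod ord x)" using pow_mod_ord[OF assms(2)] by simp
  moreover have "k mod ord x < ord x" using o by simp
  ultimately show ?thesis by blast
qed

lemma (in group) pow_in_gen: "x \<in> carrier G \<Longrightarrow> x [^] (k::nat) \<in> generate G {x}"
proof -
  assume x: "x \<in> carrier G"
  have "x [^] (int k) \<in> generate G {x}" using generate_pow[OF x] by blast
  then show ?thesis by (simp add: int_pow_int)
qed

lemma (in group) unique_invol:
  assumes fin: "finite (carrier G)" and xg: "xg \<in> carrier G"
    and s: "s \<in> generate G {xg}" "s \<otimes> s = \<one>" "s \<noteq> \<one>"
    and t: "t \<in> generate G {xg}" "t \<otimes> t = \<one>" "t \<noteq> \<one>"
  shows "s = t"
proof -
  have aux: "2 * i = ord xg" if "i < ord xg" "xg [^] i \<otimes> xg [^] i = \<one>" "xg [^] i \<noteq> \<one>" for i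
  proof -
    have "xg [^] (i + i) = \<one>" using that xg by (simp add: nat_pow_mult)
    then have "ord xg dvd 2 * i" using pow_eq_id[OF xg] by (simp add: mult_2)
    then obtain q where q: "2 * i = ord xg * q" by auto
    have "\<not> ord xg dvd i" using that(3) pow_eq_id[OF xg] by simp
    then have "i \<noteq> 0" by (metis dvd_0_right)
    then have "q \<noteq> 0" using q by (metis mult_0_right mult_is_0 zero_neq_numeral)
    moreover have "ord xg * q < ord xg * 2" using q that(1) by linarith
    then have "q < 2" by simp
    ultimately have "q = 1" by auto
    then show ?thesis using q by simp
  qed
  obtain i where i: "i < ord xg" "s = xg [^] i" using gen_nat_pow[OF fin xg s(1)] by auto
  obtain j where j: "j < ord xg" "t = xg [^] j" using gen_nat_pow[OF fin xg t(1)] by auto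
  have "2 * i = 2 * j" using aux[of i] aux[of j] i j s t by simp
  then show ?thesis using i j by simp
qed

locale MC = group G for G :: "('a, 'b) monoid_scheme" (structure) +
  fixes m n :: nat and f :: "'a \<Rightarrow> (nat \<Rightarrow> int) \<times> int"
  assumes fin: "finite (carrier G)" and m_pos: "m > 0" and n_pos: "n > 0" and n_odd: "odd n"
    and fbij: "bij_betw f (carrier G) (carrier (elem_Z2_times_Zn m n))"
    and fadj: "\<And>x y. x \<in> carrier G \<Longrightarrow> y \<in> carrier G \<Longrightarrow> power_adj G x y \<longleftrightarrow> power_adj (elem_Z2_times_Zn m n) (f x) (f y)"
    and f1: "f \<one> = (zV m, 0)"
begin

abbreviation "HH \<equiv> elem_Z2_times_Zn m n"
abbreviation "AA \<equiv> {..<m} \<rightarrow>\<^sub>E {0..<2::int}"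

definition gi :: "(nat \<Rightarrow> int) \<times> int \<Rightarrow> 'a" where "gi h = inv_into (carrier G) f h"

lemma carHH: "carrier HH = AA \<times> {0..<int n}" using carrier_HH n_pos by auto

lemma f_in: "x \<in> carrier G \<Longrightarrow> f x \<in> carrier HH" using fbij bij_betwE by blast
lemma gi_in: "h \<in> carrier HH \<Longrightarrow> gi h \<in> carrier G"
  unfolding gi_def using fbij by (metis bij_betw_def inv_into_into)
lemma f_gi: "h \<in> carrier HH \<Longrightarrow> f (gi h) = h"
  unfolding gi_def using fbij by (metis bij_betw_def f_inv_into_f)
lemma gi_f: "x \<in> carrier G \<Longrightarrow> gi (f x) = x"
  unfolding gi_def using fbij by (metis bij_betw_def inv_into_f_f)
lemma f_inj: "x \<in> carrier G \<Longrightarrow> y \<in> carrier G \<Longrightarrow> f x = f y \<Longrightarrow> x = y"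
  using fbij by (metis bij_betw_def inj_onD)
lemma gi_inj: "h \<in> carrier HH \<Longrightarrow> h' \<in> carrier HH \<Longrightarrow> gi h = gi h' \<Longrightarrow> h = h'"
  using f_gi by metis
lemma gi_1: "gi (zV m, 0) = \<one>" using gi_f[of \<one>] f1 by simp
lemma adjg: "h \<in> carrier HH \<Longrightarrow> h' \<in> carrier HH \<Longrightarrow> power_adj G (gi h) (gi h') \<longleftrightarrow> power_adj HH h h'"
  using fadj[OF gi_in gi_in] f_gi by simp

lemma inHH: "a \<in> AA \<Longrightarrow> b \<in> {0..<int n} \<Longrightarrow> (a, b) \<in> carrier HH" using carHH by auto
lemma one_mod: "1 mod int n \<in> {0..<int n}" using n_pos by simp

definition tt :: "(nat \<Rightarrow> int) \<Rightarrow> 'a" where "tt a = gi (a, 0)"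
definition xx :: "(nat \<Rightarrow> int) \<Rightarrow> 'a" where "xx a = gi (a, 1 mod int n)"
definition KK :: "'a set" where "KK = gi ` ({zV m} \<times> {0..<int n})"

context
  fixes a assumes a: "a \<in> AA" "a \<noteq> zV m"
begin

lemma a0: "(a, 0) \<in> carrier HH" using inHH a n_pos by auto
lemma t_in: "tt a \<in> carrier G" unfolding tt_def using gi_in a0 by simp
lemma f_t: "f (tt a) = (a, 0)" unfolding tt_def using f_gi a0 by simp
lemma t_ne1: "tt a \<noteq> \<one>"
proof
  assume "tt a = \<one>"
  then have "f (tt a) = f \<one>" by simp
  then show False using f_t f1 a by simp
qed

lemma t_invol: "tt a \<otimes> tt a = \<one>"
proof -
  let ?t = "tt a"
  let ?u = "inv ?t"
  have t: "?t \<in> carrier G" by (rule t_in)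
  have u: "?u \<in> carrier G" using t by simp
  have "?u = ?t"
  proof (rule ccontr)
    assume ne: "?u \<noteq> ?t"
    have u1: "?u \<noteq> \<one>" using t_ne1 t by (metis inv_one inv_inv)
    have geq: "generate G {?u} = generate G {?t}" using gen_inv_eq[OF t] .
    have "?u \<in> generate G {?t}" using generate.inv[of ?t "{?t}" G] by simp
    then have "power_adj G ?t ?u" using ne t u unfolding power_adj_def by auto
    then have adjH: "power_adj HH (a, 0) (f ?u)" using fadj[OF t u] f_t by simp
    have fu: "f ?u \<in> carrier HH" using f_in[OF u] .
    have fu1: "f ?u \<noteq> (zV m, 0)" using u1 f1 f_inj[OF u one_closed] by auto
    have "fst (f ?u) = a" using HH_P5[OF n_pos a fu fu1 adjH] .
    then obtain b where fub: "f ?u = (a, b)" by (metis prod.collapse)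
    have b: "b \<in> {0..<int n}" using fu fub carHH by auto
    have b0: "b \<noteq> 0" using fub f_t ne f_inj[OF u t] by auto
    have adj1: "power_adj HH (a, b) (zV m, b)" using HH_P3[OF n_pos n_odd a b] .
    define w where "w = gi (zV m, b)"
    have zb: "(zV m, b) \<in> carrier HH" using inHH[OF zV_in b] .
    have w: "w \<in> carrier G" unfolding w_def using gi_in[OF zb] .
    have fw: "f w = (zV m, b)" unfolding w_def using f_gi[OF zb] .
    have "power_adj G ?u w" using fadj[OF u w] fub fw adj1 by simp
    moreover have "w \<noteq> ?u"
    proof
      assume "w = ?u"
      then have "f w = f ?u" by (rule arg_cong)
      then show False using fw fub a(2) by simp
    qed
    moreover have "w \<noteq> ?t"
    proof
      assume "w = ?t"
      then have "f w = f ?t" by (rule arg_cong)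
      then show False using fw f_t a(2) by simp
    qed
    ultimately have "power_adj G ?t w" using twin_adj[OF u t w] geq by simp
    then have "power_adj HH (a, 0) (zV m, b)" using fadj[OF t w] f_t fw by simp
    then show False using HH_P4[OF n_pos a b b0] by simp
  qed
  then show ?thesis using r_inv[OF t] by simp
qed

lemma t_below: "y \<in> carrier G \<Longrightarrow> y \<noteq> \<one> \<Longrightarrow> y \<noteq> tt a \<Longrightarrow> power_adj G y (tt a) \<Longrightarrow> tt a \<in> generate G {y}"
  using invol_gen[OF t_in t_invol] unfolding power_adj_def by auto

lemma t_notin_K: "b \<in> {0..<int n} \<Longrightarrow> tt a \<notin> generate G {gi (zV m, b)}"
proof
  assume b: "b \<in> {0..<int n}" and tin: "tt a \<in> generate G {gi (zV m, b)}"
  have zb: "(zV m, b) \<in> carrier HH" using inHH[OF zV_in b] .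
  show False
  proof (cases "b = 0")
    case True
    then show False using tin gi_1 generate_one t_ne1 by simp
  next
    case False
    have "gi (zV m, b) \<noteq> tt a" using f_gi[OF zb] f_t a by (metis Pair_inject)
    then have "power_adj G (gi (zV m, b)) (tt a)" using tin gi_in[OF zb] t_in unfolding power_adj_def by auto
    then have "power_adj HH (zV m, b) (a, 0)" using adjg[OF zb a0] unfolding tt_def by simp
    then show False using HH_P4[OF n_pos a b False] power_adj_sym by metis
  qed
qed

lemma a1: "(a, 1 mod int n) \<in> carrier HH" using inHH a one_mod by auto
lemma x_in: "xx a \<in> carrier G" unfolding xx_def using gi_in a1 by simp

lemma t_in_x: "tt a \<in> generate G {xx a}"
proof (cases "n = 1")
  case True
  then have "xx a = tt a" unfolding xx_def tt_def by simp
  then show ?thesis using generate.incl[of "tt a" "{tt a}" G] by simp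
next
  case False
  then have n1: "1 mod int n = 1" using n_pos by simp
  have b: "1 \<in> {0..<int n}" using n_pos False by simp
  have "power_adj HH (a, 1 mod int n) (a, 0)" using HH_P2[OF n_pos n_odd a(1) b] n1 by simp
  then have adj: "power_adj G (xx a) (tt a)" using adjg[OF a1 a0] unfolding xx_def tt_def by simp
  have "xx a \<noteq> \<one>" using f_gi[OF a1] f1 a unfolding xx_def by (metis Pair_inject)
  moreover have "xx a \<noteq> tt a" using adj power_adj_irrefl by metis
  ultimately show ?thesis using t_below[OF x_in] adj by simp
qed

lemma K_in_x: "b \<in> {0..<int n} \<Longrightarrow> gi (zV m, b) \<in> generate G {xx a}"
proof -
  assume b: "b \<in> {0..<int n}"
  have zb: "(zV m, b) \<in> carrier HH" using inHH[OF zV_in b] .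
  have "power_adj HH (a, 1 mod int n) (zV m, b)" using HH_P6[OF n_pos n_odd a b] .
  then have adj: "power_adj G (xx a) (gi (zV m, b))" using adjg[OF a1 zb] unfolding xx_def by simp
  then have "gi (zV m, b) \<in> generate G {xx a} \<or> xx a \<in> generate G {gi (zV m, b)}" unfolding power_adj_def by auto
  moreover have "xx a \<notin> generate G {gi (zV m, b)}"
  proof
    assume "xx a \<in> generate G {gi (zV m, b)}"
    then have "generate G {xx a} \<subseteq> generate G {gi (zV m, b)}" using gen_mem_iff[OF x_in gi_in[OF zb]] by simp
    then show False using t_in_x t_notin_K[OF b] by auto
  qed
  ultimately show ?thesis by simp
qed

lemma K_sub_x: "KK \<subseteq> generate G {xx a}" unfolding KK_def using K_in_x by auto

lemma card_gen_x: "card (generate G {xx a}) \<le> 2 * n"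
proof -
  have sub: "generate G {xx a} \<subseteq> carrier G" using generate_incl[of "{xx a}"] x_in by simp
  have "f ` generate G {xx a} \<subseteq> {zV m, a} \<times> {0..<int n}"
  proof
    fix h assume "h \<in> f ` generate G {xx a}"
    then obtain w where w: "w \<in> generate G {xx a}" "h = f w" by auto
    have wc: "w \<in> carrier G" using w sub by auto
    have fh: "f w \<in> carrier HH" using f_in[OF wc] .
    show "h \<in> {zV m, a} \<times> {0..<int n}"
    proof (cases "w = xx a")
      case True
      then show ?thesis using w f_gi[OF a1] one_mod unfolding xx_def by auto
    next
      case False
      then have "power_adj G (xx a) w" using w wc x_in unfolding power_adj_def by auto
      then have "power_adj HH (a, 1 mod int n) (f w)" using fadj[OF x_in wc] f_gi[OF a1] unfolding xx_def by simp
      then have "fst (f w) \<in> {zV m, a}" using adj_HH_fst[OF n_pos a one_mod fh] by simp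
      then show ?thesis using fh carHH w by (auto simp: mem_Times_iff)
    qed
  qed
  moreover have "inj_on f (generate G {xx a})" using fbij sub by (meson bij_betw_def inj_on_subset)
  ultimately have "card (generate G {xx a}) \<le> card ({zV m, a} \<times> {0..<int n})"
    by (metis card_image card_mono finite_SigmaI finite.emptyI finite.insertI finite_atLeastLessThan_int)
  also have "\<dots> = 2 * n" using a by (simp add: card_cartesian_product)
  finally show ?thesis .
qed

end

end

context MC begin

lemma card_K: "card KK = n"
proof -
  have sub: "{zV m} \<times> {0..<int n} \<subseteq> carrier HH" using carHH zV_in by auto
  have "inj_on gi ({zV m} \<times> {0..<int n})" using gi_inj sub by (meson inj_onI subsetD)
  then have "card KK = card ({zV m} \<times> {0..<int n})" unfolding KK_def by (rule card_image)
  also have "\<dots> = n" by (simp add: card_cartesian_product)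
  finally show ?thesis .
qed

definition QQ :: "'a \<Rightarrow> 'a set" where "QQ y = {y [^] (2 * i) | i::nat. True}"

context
  fixes a assumes a: "a \<in> AA" "a \<noteq> zV m"
begin

lemma ord_t: "ord (tt a) = 2"
proof -
  have t: "tt a \<in> carrier G" using t_in[OF a] .
  have "tt a [^] (2::nat) = \<one>" using t_invol[OF a] t by (simp add: numeral_2_eq_2)
  then have d: "ord (tt a) dvd 2" using pow_eq_id[OF t] by simp
  have "ord (tt a) \<noteq> 1" using ord_eq_1[OF t] t_ne1[OF a] by simp
  moreover have "ord (tt a) \<ge> 1" using ord_ge_1[OF fin t] .
  moreover have "ord (tt a) \<le> 2" using d by (simp add: dvd_imp_le)
  ultimately show ?thesis by linarith
qed

lemma K_odd: "k \<in> KK \<Longrightarrow> odd (ord k)"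
proof (rule ccontr)
  assume k: "k \<in> KK" and ev: "\<not> odd (ord k)"
  obtain b where b: "b \<in> {0..<int n}" and kb: "k = gi (zV m, b)" using k unfolding KK_def by auto
  have zb: "(zV m, b) \<in> carrier HH" using inHH[OF zV_in b] .
  have kc: "k \<in> carrier G" using kb gi_in[OF zb] by simp
  define r where "r = ord k"
  have r1: "r \<ge> 1" unfolding r_def using ord_ge_1[OF fin kc] .
  have rev: "even r" using ev r_def by simp
  then have r2: "r div 2 > 0" "r div 2 < r" using r1 by (auto elim!: evenE)
  define s where "s = k [^] (r div 2)"
  have sc: "s \<in> carrier G" unfolding s_def using kc by simp
  have "\<not> r dvd r div 2" using r2 by (meson dvd_imp_le not_le)
  then have s1: "s \<noteq> \<one>" unfolding s_def using pow_eq_id[OF kc] r_def by simp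
  have "s \<otimes> s = k [^] (r div 2 + r div 2)" unfolding s_def using kc by (simp add: nat_pow_mult)
  also have "r div 2 + r div 2 = r" using rev by auto
  finally have ss: "s \<otimes> s = \<one>" using kc r_def by simp
  have "k \<in> generate G {xx a}" using K_sub_x[OF a] k by auto
  then have gk: "generate G {k} \<subseteq> generate G {xx a}" using gen_mem_iff[OF kc x_in[OF a]] by simp
  have sk: "s \<in> generate G {k}" unfolding s_def using pow_in_gen[OF kc] .
  have "s = tt a" using unique_invol[OF fin x_in[OF a] _ ss s1 t_in_x[OF a] t_invol[OF a] t_ne1[OF a]] sk gk by auto
  then have "tt a \<in> generate G {gi (zV m, b)}" using sk kb by simp
  then show False using t_notin_K[OF a b] by simp
qed

lemma K_sub_Q: "KK \<subseteq> QQ (xx a)"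
proof
  fix k assume k: "k \<in> KK"
  obtain b where b: "b \<in> {0..<int n}" and kb: "k = gi (zV m, b)" using k unfolding KK_def by auto
  have zb: "(zV m, b) \<in> carrier HH" using inHH[OF zV_in b] .
  have kc: "k \<in> carrier G" using kb gi_in[OF zb] by simp
  define r where "r = ord k"
  have rod: "odd r" using K_odd k r_def by simp
  define z where "z = k [^] ((r + 1) div 2)"
  have "z [^] (2::nat) = k [^] ((r + 1) div 2 * 2)" unfolding z_def using kc by (simp add: nat_pow_pow)
  also have "(r + 1) div 2 * 2 = r + 1" using rod by presburger
  also have "k [^] (r + 1) = k" using kc r_def by simp
  finally have kz: "k = z [^] (2::nat)" by simp
  have "k \<in> generate G {xx a}" using K_sub_x[OF a] k by auto
  then have gk: "generate G {k} \<subseteq> generate G {xx a}" using gen_mem_iff[OF kc x_in[OF a]] by simp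
  have "z \<in> generate G {xx a}" unfolding z_def using pow_in_gen[OF kc] gk by auto
  then obtain j :: nat where "z = xx a [^] j" using gen_nat_pow[OF fin x_in[OF a]] by auto
  then have "k = xx a [^] (2 * j)" using kz x_in[OF a] by (simp add: nat_pow_pow mult.commute)
  then show "k \<in> QQ (xx a)" unfolding QQ_def by auto
qed

lemma ord_x: "ord (xx a) = 2 * n" and K_eq_Q: "KK = QQ (xx a)"
proof -
  let ?X = "xx a"
  define N where "N = ord ?X"
  have X: "?X \<in> carrier G" using x_in[OF a] .
  have NX: "N = card (generate G {?X})" unfolding N_def using generate_pow_card[OF X] .
  have N1: "N \<ge> 1" unfolding N_def using ord_ge_1[OF fin X] .
  obtain j :: nat where tj: "tt a = ?X [^] j" using gen_nat_pow[OF fin X t_in_x[OF a]] by auto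
  have "tt a [^] N = (?X [^] N) [^] j" using tj X by (simp add: nat_pow_pow mult.commute)
  also have "\<dots> = \<one>" unfolding N_def using X by simp
  finally have "ord (tt a) dvd N" using pow_eq_id[OF t_in[OF a]] by simp
  then have Nev: "even N" using ord_t by simp
  define M where "M = N div 2"
  have NM: "N = 2 * M" using Nev unfolding M_def by simp
  have M0: "M > 0" using N1 NM by simp
  have sub: "QQ ?X \<subseteq> (\<lambda>i. ?X [^] (2 * i)) ` {..<M}"
  proof
    fix y assume "y \<in> QQ ?X"
    then obtain i :: nat where yi: "y = ?X [^] (2 * i)" unfolding QQ_def by auto
    have "?X [^] (2 * i) = ?X [^] ((2 * i) mod N)" unfolding N_def by (rule pow_mod_ord[OF X])
    also have "(2 * i) mod N = 2 * (i mod M)" unfolding NM by (rule mod_mult_mult1)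
    finally show "y \<in> (\<lambda>i. ?X [^] (2 * i)) ` {..<M}" using yi M0 by auto
  qed
  have fimg: "finite ((\<lambda>i. ?X [^] (2 * i)) ` {..<M})" by simp
  have fQ: "finite (QQ ?X)" using finite_subset[OF sub fimg] .
  have "card (QQ ?X) \<le> card ((\<lambda>i. ?X [^] (2 * i)) ` {..<M})" using card_mono[OF fimg sub] .
  also have "\<dots> \<le> M" using card_image_le[of "{..<M}" "\<lambda>i. ?X [^] (2 * i)"] by simp
  finally have cQ: "card (QQ ?X) \<le> M" .
  have "n \<le> card (QQ ?X)" using card_mono[OF fQ K_sub_Q] card_K by simp
  then have "n \<le> M" using cQ by simp
  moreover have "N \<le> 2 * n" using card_gen_x[OF a] NX by simp
  ultimately have NN: "N = 2 * n" using NM by simp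
  then show "ord (xx a) = 2 * n" unfolding N_def .
  have "card (QQ ?X) \<le> card KK" using cQ card_K NN NM by simp
  then show "KK = QQ ?X" using card_seteq[OF fQ K_sub_Q] by simp
qed

end

end

context MC begin

definition a0 :: "nat \<Rightarrow> int" where "a0 = (\<lambda>i\<in>{..<m}. if i = 0 then 1 else 0)"

lemma a0_in: "a0 \<in> AA" "a0 \<noteq> zV m"
proof -
  show "a0 \<in> AA" unfolding a0_def by auto
  have "a0 0 = 1" "zV m 0 = 0" using m_pos unfolding a0_def zV_def by auto
  then show "a0 \<noteq> zV m" by auto
qed

definition cc :: 'a where "cc = xx a0 [^] (2::nat)"

lemma cc_in: "cc \<in> carrier G" unfolding cc_def using x_in[OF a0_in] by simp

lemma ord_cc: "ord cc = n"
proof -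
  have "ord cc = ord (xx a0) div gcd (ord (xx a0)) 2" unfolding cc_def using ord_pow_gen[OF x_in[OF a0_in], of 2] by simp
  also have "\<dots> = n" using ord_x[OF a0_in] by simp
  finally show ?thesis .
qed

lemma cc_K: "cc \<in> KK"
proof -
  have "cc \<in> QQ (xx a0)" unfolding cc_def QQ_def by (rule CollectI, rule exI[of _ 1]) simp
  then show ?thesis using K_eq_Q[OF a0_in] by simp
qed

lemma t_comm_c: "a \<in> AA \<Longrightarrow> a \<noteq> zV m \<Longrightarrow> tt a \<otimes> cc = cc \<otimes> tt a"
proof -
  assume a: "a \<in> AA" "a \<noteq> zV m"
  have X: "xx a \<in> carrier G" using x_in[OF a] .
  obtain i :: nat where i: "tt a = xx a [^] i" using gen_nat_pow[OF fin X t_in_x[OF a]] by auto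
  have "cc \<in> generate G {xx a}" using K_sub_x[OF a] cc_K by auto
  then obtain j :: nat where j: "cc = xx a [^] j" using gen_nat_pow[OF fin X] by auto
  have "xx a [^] i \<otimes> xx a [^] j = xx a [^] j \<otimes> xx a [^] i" using X by (simp add: nat_pow_mult add.commute)
  then show ?thesis using i j by simp
qed

theorem MC_iso: "G \<cong> elem_Z2_times_Zn m n"
proof -
  define T where "T = insert \<one> (tt ` (AA - {zV m}))"
  have injt: "inj_on tt (AA - {zV m})"
  proof (rule inj_onI)
    fix a a' assume a: "a \<in> AA - {zV m}" and a': "a' \<in> AA - {zV m}" and e: "tt a = tt a'"
    have "(a, 0) = (a', 0)" using gi_inj[OF a0 a0] e a a' unfolding tt_def by auto
    then show "a = a'" by simp
  qed
  have "\<one> \<notin> tt ` (AA - {zV m})" using t_ne1 by force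
  then have "card T = card (AA - {zV m}) + 1" unfolding T_def
    using card_image[OF injt] by (simp add: finite_PiE)
  also have "card (AA - {zV m}) = 2^m - 1" using zV_in by (simp add: card_PiE)
  finally have cT: "card T = 2^m" by simp
  have cG: "card (carrier G) = 2^m * n" using bij_betw_same_card[OF fbij] card_HH[OF n_pos] by simp
  interpret GTl2 G T cc n m
  proof
    show "odd n" by (rule n_odd)
    show "n > 0" by (rule n_pos)
    show "cc \<in> carrier G" by (rule cc_in)
    show "ord cc = n" by (rule ord_cc)
    show "T \<subseteq> carrier G" unfolding T_def using t_in by auto
    show "\<one> \<in> T" unfolding T_def by simp
    show "\<And>t. t \<in> T \<Longrightarrow> t \<otimes> t = \<one>" unfolding T_def using t_invol by auto
    show "\<And>t. t \<in> T \<Longrightarrow> t \<otimes> cc = cc \<otimes> t" unfolding T_def using t_comm_c cc_in by auto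
    show "finite (carrier G)" by (rule fin)
    show "card (carrier G) = 2^m * n" by (rule cG)
    show "card T = 2^m" by (rule cT)
  qed
  show ?thesis by (rule GT_iso)
qed

end

lemma iso_pg:
  assumes G: "group G" and H: "group H" and iso: "G \<cong> H"
  shows "power_graph_iso G H"
proof -
  obtain h where h: "h \<in> iso G H" using iso unfolding is_iso_def by auto
  have hom: "h \<in> hom G H" and bij: "bij_betw h (carrier G) (carrier H)" using h unfolding iso_def by auto
  interpret gh: group_hom G H h using G H hom by (simp add: group_hom_def group_hom_axioms_def)
  have inj: "inj_on h (carrier G)" using bij bij_betw_def by blast
  have gen: "generate H {h x} = h ` generate G {x}" if "x \<in> carrier G" for x
    using gh.generate_img[of "{x}"] that by simp
  have sub: "generate G {x} \<subseteq> carrier G" if "x \<in> carrier G" for x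
    using group.generate_incl[OF G, of "{x}"] that by simp
  have mem: "h y \<in> h ` generate G {x} \<longleftrightarrow> y \<in> generate G {x}" if "x \<in> carrier G" "y \<in> carrier G" for x y
    using inj sub[OF that(1)] that(2) by (auto dest: inj_onD)
  have "power_adj G x y \<longleftrightarrow> power_adj H (h x) (h y)" if "x \<in> carrier G" "y \<in> carrier G" for x y
  proof -
    have "h x \<noteq> h y \<longleftrightarrow> x \<noteq> y" using inj that by (auto dest: inj_onD)
    then show ?thesis unfolding power_adj_def using that gen mem bij_betwE[OF bij] by auto
  qed
  then show ?thesis unfolding power_graph_iso_def using bij by blast
qed

theorem corollary6:
  fixes G :: "('a, 'b) monoid_scheme" and m n :: nat
  assumes "group G" and "finite (carrier G)"
    and "m > 0" and "n > 0" and "odd n"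
  shows "power_graph_iso G (elem_Z2_times_Zn m n) \<longleftrightarrow> G \<cong> elem_Z2_times_Zn m n"
proof
  assume "G \<cong> elem_Z2_times_Zn m n"
  then show "power_graph_iso G (elem_Z2_times_Zn m n)" using iso_pg assms(1) group_HH by blast
next
  assume "power_graph_iso G (elem_Z2_times_Zn m n)"
  then obtain f0 where f0: "bij_betw f0 (carrier G) (carrier (elem_Z2_times_Zn m n))"
    and adj0: "\<forall>x\<in>carrier G. \<forall>y\<in>carrier G. power_adj G x y \<longleftrightarrow> power_adj (elem_Z2_times_Zn m n) (f0 x) (f0 y)"
    unfolding power_graph_iso_def by blast
  interpret G: group G by (rule assms(1))
  interpret H: group "elem_Z2_times_Zn m n" by (rule group_HH)
  let ?H = "elem_Z2_times_Zn m n"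
  define z where "z = f0 \<one>\<^bsub>G\<^esub>"
  define e where "e = (zV m, 0::int)"
  have eH: "e = \<one>\<^bsub>?H\<^esub>" unfolding e_def by (simp add: one_HH)
  have zin: "z \<in> carrier ?H" unfolding z_def using f0 bij_betwE by blast
  have ein: "e \<in> carrier ?H" using eH by simp
  have zuniv: "power_adj ?H z y" if "y \<in> carrier ?H" "y \<noteq> z" for y
  proof -
    have "y \<in> f0 ` carrier G" using that(1) f0 by (simp add: bij_betw_def)
    then obtain x where x: "x \<in> carrier G" "y = f0 x" by blast
    have "x \<noteq> \<one>\<^bsub>G\<^esub>"
    proof
      assume "x = \<one>\<^bsub>G\<^esub>"
      then have "y = z" using x(2) z_def by simp
      then show False using that(2) by simp
    qed
    then have "power_adj G \<one>\<^bsub>G\<^esub> x" using G.one_adj x(1) by simp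
    then have "power_adj ?H (f0 \<one>\<^bsub>G\<^esub>) (f0 x)" using adj0[rule_format, OF G.one_closed x(1)] by simp
    then show ?thesis using x(2) z_def by simp
  qed
  have euniv: "power_adj ?H e y" if "y \<in> carrier ?H" "y \<noteq> e" for y
    using H.one_adj that eH by simp
  define f where "f = swp z e \<circ> f0"
  have fbij: "bij_betw f (carrier G) (carrier ?H)"
    unfolding f_def using bij_betw_trans[OF f0 swp_bij[OF zin ein]] .
  have fadj: "power_adj G x y \<longleftrightarrow> power_adj ?H (f x) (f y)" if "x \<in> carrier G" "y \<in> carrier G" for x y
  proof -
    have px: "f0 x \<in> carrier ?H" and py: "f0 y \<in> carrier ?H" using that f0 bij_betwE by blast+
    have "power_adj ?H (swp z e (f0 x)) (swp z e (f0 y)) \<longleftrightarrow> power_adj ?H (f0 x) (f0 y)"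
      by (rule swp_adj[OF zin ein power_adj_sym power_adj_irrefl zuniv euniv px py])
    then show ?thesis using adj0[rule_format, OF that] unfolding f_def o_def by simp
  qed
  have f1: "f \<one>\<^bsub>G\<^esub> = (zV m, 0)" unfolding f_def z_def swp_def e_def by simp
  interpret MC G m n f
    by (unfold_locales) (rule assms(2), rule assms(3), rule assms(4), rule assms(5), rule fbij, erule (1) fadj, rule f1)
  show "G \<cong> ?H" by (rule MC_iso)
qed

end
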